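(* Let $X$ be a compact metric space and $T:X\to X$ a homeomorphism such that the $\mathbb{Z}$-system $(X,T)$ is minimal and tame. Then the topological entropy $h_{\rm top}(X,T)$ is zero.
   Context: The enveloping semigroup $E(X,T)$ is the pointwise closure in $X^X$ of $\{T^n:n\in\mathbb{Z}\}$. A space is Fréchet if every point in the closure of a set $A$ is a limit of a sequence from $A$. The system is tame if $E(X,T)$ is separable and Fréchet. Minimal: every orbit is dense. *)

theory Defs
  imports "HOL-Analysis.Analysis"
begin

text \<open>Integer iterates of a homeomorphism T of X (restricted to X, so they are
points of the function space X^X with the product (pointwise) topology).\<close>
definition zpow :: "'a set \<Rightarrow> ('a \<Rightarrow> 'a) \<Rightarrow> int \<Rightarrow> 'a \<Rightarrow> 'a" where
  "zpow X T n = (if n \<ge> 0 then T ^^ nat n else (inv_into X T) ^^ nat (- n))"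

definition ptwise_top :: "'a::topological_space set \<Rightarrow> ('a \<Rightarrow> 'a) topology" where
  "ptwise_top X = product_topology (\<lambda>_. top_of_set X) X"

definition enveloping_semigroup :: "'a::topological_space set \<Rightarrow> ('a \<Rightarrow> 'a) \<Rightarrow> ('a \<Rightarrow> 'a) set" where
  "enveloping_semigroup X T =
     (ptwise_top X) closure_of ((\<lambda>n. restrict (zpow X T n) X) ` UNIV)"

definition Frechet_space :: "'b topology \<Rightarrow> bool" where
  "Frechet_space S \<longleftrightarrow>
     (\<forall>A x. A \<subseteq> topspace S \<and> x \<in> S closure_of A \<longrightarrow>
        (\<exists>\<sigma>::nat \<Rightarrow> 'b. range \<sigma> \<subseteq> A \<and> limitin S \<sigma> x sequentially))"

definition tame :: "'a::topological_space set \<Rightarrow> ('a \<Rightarrow> 'a) \<Rightarrow> bool" where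
  "tame X T \<longleftrightarrow>
     separable_space (subtopology (ptwise_top X) (enveloping_semigroup X T)) \<and>
     Frechet_space (subtopology (ptwise_top X) (enveloping_semigroup X T))"

definition minimal_system :: "'a::topological_space set \<Rightarrow> ('a \<Rightarrow> 'a) \<Rightarrow> bool" where
  "minimal_system X T \<longleftrightarrow> (\<forall>x\<in>X. closure (range (\<lambda>n. zpow X T n x)) = X)"

definition separated_set :: "'a::metric_space set \<Rightarrow> ('a \<Rightarrow> 'a) \<Rightarrow> nat \<Rightarrow> real \<Rightarrow> 'a set \<Rightarrow> bool" where
  "separated_set X T n \<epsilon> S \<longleftrightarrow> S \<subseteq> X \<and>
     (\<forall>x\<in>S. \<forall>y\<in>S. x \<noteq> y \<longrightarrow> (\<exists>i<n. dist ((T ^^ i) x) ((T ^^ i) y) > \<epsilon>))"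

definition max_sep :: "'a::metric_space set \<Rightarrow> ('a \<Rightarrow> 'a) \<Rightarrow> nat \<Rightarrow> real \<Rightarrow> nat" where
  "max_sep X T n \<epsilon> = Sup {card S | S. finite S \<and> separated_set X T n \<epsilon> S}"

definition topological_entropy :: "'a::metric_space set \<Rightarrow> ('a \<Rightarrow> 'a) \<Rightarrow> ereal" where
  "topological_entropy X T =
     (SUP \<epsilon>\<in>{0<..}. limsup (\<lambda>n. ereal (ln (real (max_sep X T n \<epsilon>)) / real n)))"

end

theory Submission
  imports Defs
begin

definition indep :: "('a \<Rightarrow> 'a) \<Rightarrow> 'a set \<Rightarrow> 'a set \<Rightarrow> 'a set \<Rightarrow> nat set \<Rightarrow> bool" where
  "indep T X A0 A1 I \<longleftrightarrow>
    (\<forall>\<xi>\<subseteq>I. \<exists>x\<in>X. \<forall>i\<in>I. (i \<in> \<xi> \<longrightarrow> (T ^^ i) x \<in> A1) \<and> (i \<notin> \<xi> \<longrightarrow> (T ^^ i) x \<in> A0))"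

lemma funpow_cont:
  assumes "continuous_on X T" "T ` X \<subseteq> X"
  shows "continuous_on X (T ^^ i) \<and> (T ^^ i) ` X \<subseteq> X"
proof (induction i)
  case 0
  then show ?case by (simp add: continuous_on_id)
next
  case (Suc i)
  then show ?case using assms
    by (auto simp: image_subset_iff intro!: continuous_on_compose2[of X T X "T ^^ i"])
qed

lemma indep_inf_point:
  fixes X :: "'a::metric_space set"
  assumes "compact X" "continuous_on X T" "T ` X \<subseteq> X" "closed A0" "closed A1"
    and fin: "\<And>F. F \<subseteq> J \<Longrightarrow> finite F \<Longrightarrow> indep T X A0 A1 F"
  shows "\<exists>x\<in>X. \<forall>i\<in>J. (i \<in> \<xi> \<longrightarrow> (T ^^ i) x \<in> A1) \<and> (i \<notin> \<xi> \<longrightarrow> (T ^^ i) x \<in> A0)"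
proof -
  define C where "C i = X \<inter> (T ^^ i) -` (if i \<in> \<xi> then A1 else A0)" for i
  have "X \<inter> (\<Inter>i\<in>J. C i) \<noteq> {}"
  proof (rule compact_imp_fip_image[OF assms(1)])
    fix i assume "i \<in> J"
    show "closed (C i)" unfolding C_def
      using funpow_cont[OF assms(2,3)] assms(1,4,5) compact_imp_closed
      by (auto intro!: continuous_closed_preimage)
  next
    fix I' assume "finite I'" "I' \<subseteq> J"
    then have "indep T X A0 A1 I'" using fin by auto
    then obtain x where "x \<in> X" "\<forall>i\<in>I'. (i \<in> \<xi> \<inter> I' \<longrightarrow> (T ^^ i) x \<in> A1) \<and> (i \<notin> \<xi> \<inter> I' \<longrightarrow> (T ^^ i) x \<in> A0)"
      unfolding indep_def by (meson inf_le2)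
    then have "x \<in> X \<inter> (\<Inter>i\<in>I'. C i)" unfolding C_def by auto
    then show "X \<inter> (\<Inter>i\<in>I'. C i) \<noteq> {}" by blast
  qed
  then obtain x where "x \<in> X" "\<forall>i\<in>J. x \<in> C i" by blast
  then show ?thesis unfolding C_def by (intro bexI[of _ x]) (auto split: if_splits)
qed

lemma tendsto_frequently_closed:
  assumes "(f \<longlongrightarrow> l) sequentially" "frequently (\<lambda>k. f k \<in> C) sequentially" "closed C"
  shows "l \<in> C"
proof (rule ccontr)
  assume "l \<notin> C"
  then have "eventually (\<lambda>k. f k \<in> - C) sequentially"
    using assms(1,3) by (intro topological_tendstoD) auto
  then show False using assms(2) by (simp add: frequently_def eventually_mono)
qed

lemma infinite_avoid:
  fixes S :: "nat set"
  assumes "infinite S" "finite F"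
  shows "\<exists>s\<in>S. s \<notin> F"
  using assms by (metis Diff_iff finite_subset subsetI)

lemma not_frechet:
  fixes X :: "'a::metric_space set"
  assumes X: "compact X" and cont: "continuous_on X T" and TX: "T ` X \<subseteq> X"
    and cl0: "closed A0" and cl1: "closed A1" and disj: "A0 \<inter> A1 = {}"
    and J: "infinite J" and fin: "\<And>F. F \<subseteq> J \<Longrightarrow> finite F \<Longrightarrow> indep T X A0 A1 F"
  shows "\<not> Frechet_space (subtopology (ptwise_top X) (enveloping_semigroup X T))"
proof
  define P where "P = ptwise_top X"
  define E where "E = enveloping_semigroup X T"
  assume Fr: "Frechet_space (subtopology (ptwise_top X) (enveloping_semigroup X T))"
  then have Fr': "Frechet_space (subtopology P E)" by (simp add: P_def E_def)
  define n where "n = enumerate J"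
  have ninj: "inj n" unfolding n_def using inj_enumerate[OF J] .
  have nJ: "n k \<in> J" for k unfolding n_def using enumerate_in_set[OF J] .
  define g where "g k = restrict (T ^^ n k) X" for k
  have fpX: "(T ^^ m) x \<in> X" if "x \<in> X" for m x using funpow_cont[OF cont TX, of m] that by auto
  have pt: "\<exists>x\<in>X. \<forall>k. (n k \<in> \<xi> \<longrightarrow> (T^^n k) x \<in> A1) \<and> (n k \<notin> \<xi> \<longrightarrow> (T^^n k) x \<in> A0)" for \<xi>
  proof -
    obtain x where "x \<in> X" "\<forall>i\<in>J. (i \<in> \<xi> \<longrightarrow> (T ^^ i) x \<in> A1) \<and> (i \<notin> \<xi> \<longrightarrow> (T ^^ i) x \<in> A0)"
      using indep_inf_point[OF X cont TX cl0 cl1 fin] by blast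
    then show ?thesis using nJ by blast
  qed
  have topP: "topspace P = (\<Pi>\<^sub>E i\<in>X. X)" by (simp add: P_def ptwise_top_def)
  have gtop: "g k \<in> topspace P" for k unfolding topP g_def using fpX by auto
  have Eeq: "E = P closure_of (range (\<lambda>n. restrict (zpow X T n) X))"
    by (simp add: E_def P_def enveloping_semigroup_def)
  have gE: "g k \<in> E" for k
  proof -
    have "g k = restrict (zpow X T (int (n k))) X" unfolding g_def zpow_def by simp
    then have "g k \<in> topspace P \<inter> range (\<lambda>n. restrict (zpow X T n) X)" using gtop[of k] by (metis IntI rangeI)
    then show ?thesis unfolding Eeq by (rule subsetD[OF closure_of_subset_Int])
  qed
  have ginj: "inj g"
  proof (rule injI)
    fix k l assume eq: "g k = g l"
    show "k = l"
    proof (rule ccontr)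
      assume "k \<noteq> l"
      then have "n k \<noteq> n l" using ninj by (meson injD)
      obtain x where "x \<in> X" and x: "\<forall>m. (n m \<in> {n k} \<longrightarrow> (T^^n m) x \<in> A1) \<and> (n m \<notin> {n k} \<longrightarrow> (T^^n m) x \<in> A0)"
        using pt by blast
      have "g k x \<in> A1" "g l x \<in> A0" using x \<open>x \<in> X\<close> \<open>n k \<noteq> n l\<close> by (auto simp: g_def)
      then show False using eq disj by auto
    qed
  qed
  have compP: "compact_space P"
    unfolding P_def ptwise_top_def
    using X by (auto simp: compact_space_product_topology intro!: compact_space_subtopology)
  have compE: "compact_space (subtopology P E)"
    by (metis E_def P_def closedin_closure_of closedin_compact_space compP compact_space_subtopology enveloping_semigroup_def)
  define A where "A = range g"
  have Ainf: "infinite A" unfolding A_def using ginj range_inj_infinite by blast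
  have Asub: "A \<subseteq> topspace (subtopology P E)" unfolding A_def using gtop gE by auto
  obtain p where p: "p \<in> (subtopology P E) derived_set_of A"
    using compact_space_imp_Bolzano_Weierstrass[OF compE Ainf Asub] by blast
  have p1: "p \<in> topspace (subtopology P E)" and p2: "\<And>U. p \<in> U \<Longrightarrow> openin (subtopology P E) U \<Longrightarrow> \<exists>y. y \<noteq> p \<and> y \<in> A \<and> y \<in> U"
    using p unfolding in_derived_set_of by blast+
  have pcl: "p \<in> (subtopology P E) closure_of (A - {p})"
    unfolding in_closure_of using p1 p2 by blast
  have Asub': "A - {p} \<subseteq> topspace (subtopology P E)" using Asub by blast
  obtain \<sigma> :: "nat \<Rightarrow> _" where \<sigma>A: "range \<sigma> \<subseteq> A - {p}" and \<sigma>lim: "limitin (subtopology P E) \<sigma> p sequentially"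
    using Fr'[unfolded Frechet_space_def, rule_format, OF conjI[OF Asub' pcl]] by blast
  have lim: "limitin P \<sigma> p sequentially" using \<sigma>lim limitin_subtopology by metis
  have pext: "p \<in> extensional X" and limx: "\<And>x. x \<in> X \<Longrightarrow> ((\<lambda>k. \<sigma> k x) \<longlongrightarrow> p x) sequentially"
    using lim unfolding P_def ptwise_top_def limitin_componentwise
    by (auto simp: limitin_subtopology)
  define \<tau> where "\<tau> k = (SOME m. \<sigma> k = g m)" for k
  have \<sigma>\<tau>: "\<sigma> k = g (\<tau> k)" for k
  proof -
    have "\<exists>m. \<sigma> k = g m" using \<sigma>A unfolding A_def by auto
    then show ?thesis unfolding \<tau>_def by (rule someI_ex)
  qed
  have finfib: "finite {k. \<tau> k = v}" for v
  proof (rule ccontr)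
    assume inf: "infinite {k. \<tau> k = v}"
    then have freq: "frequently (\<lambda>k. \<tau> k = v) sequentially"
      unfolding frequently_sequentially infinite_nat_iff_unbounded_le by auto
    have "p x = g v x" if "x \<in> X" for x
    proof -
      have "frequently (\<lambda>k. \<sigma> k x \<in> {g v x}) sequentially"
        using freq by (rule frequently_elim1) (simp add: \<sigma>\<tau>)
      then have "p x \<in> {g v x}" by (rule tendsto_frequently_closed[OF limx[OF that]]) simp
      then show ?thesis by simp
    qed
    moreover have "g v \<in> extensional X" by (simp add: g_def)
    ultimately have "p = g v" using pext by (simp add: extensionalityI)
    moreover obtain k where "\<tau> k = v" using inf by (metis (mono_tags, lifting) empty_Collect_eq finite.emptyI)
    ultimately show False using \<sigma>A \<sigma>\<tau> by (metis Diff_iff insertI1 rangeI subsetD)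
  qed
  define R where "R = range \<tau>"
  have Rinf: "infinite R"
  proof
    assume "finite R"
    then have "finite (\<Union>v\<in>R. {k. \<tau> k = v})" using finfib by auto
    moreover have "(\<Union>v\<in>R. {k. \<tau> k = v}) = UNIV" unfolding R_def by auto
    ultimately show False by simp
  qed
  define r where "r = enumerate R"
  have rinj: "inj r" unfolding r_def using inj_enumerate[OF Rinf] .
  have rR: "r j \<in> R" for j unfolding r_def using enumerate_in_set[OF Rinf] .
  define \<xi> where "\<xi> = n ` r ` {j. even j}"
  obtain x where "x \<in> X" and x: "\<forall>k. (n k \<in> \<xi> \<longrightarrow> (T^^n k) x \<in> A1) \<and> (n k \<notin> \<xi> \<longrightarrow> (T^^n k) x \<in> A0)"
    using pt by blast
  have evinf: "infinite {j::nat. even j}"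
    unfolding infinite_nat_iff_unbounded_le by (metis (mono_tags) dvd_triv_left le_add2 mem_Collect_eq mult_2)
  have odinf: "infinite {j::nat. odd j}"
    unfolding infinite_nat_iff_unbounded_le
  proof
    fix m :: nat show "\<exists>n\<ge>m. n \<in> {j. odd j}" by (rule exI[of _ "2*m+1"]) auto
  qed
  have key: "frequently (\<lambda>k. \<sigma> k x \<in> (if b then A1 else A0)) sequentially" for b
    unfolding frequently_sequentially
  proof
    fix N
    have "finite (\<tau> ` {..<N})" by simp
    moreover have "infinite (r ` {j. even j = b})"
      using evinf odinf rinj by (cases b) (auto dest!: finite_imageD intro: inj_on_subset)
    ultimately obtain s where s: "s \<in> r ` {j. even j = b}" "s \<notin> \<tau> ` {..<N}"
      using infinite_avoid by blast
    then obtain j where j: "even j = b" "s = r j" by auto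
    obtain k where k: "\<tau> k = s" using rR[of j] j(2) unfolding R_def by (metis imageE)
    have "k \<ge> N" using s k by (metis imageI lessThan_iff not_le)
    moreover have "\<sigma> k x \<in> (if b then A1 else A0)"
    proof -
      have sk: "\<sigma> k x = (T ^^ n (r j)) x" using \<sigma>\<tau> k j \<open>x \<in> X\<close> by (simp add: g_def)
      have "n (r j) \<in> \<xi> \<longleftrightarrow> even j"
        unfolding \<xi>_def using ninj rinj by (auto simp: inj_eq)
      then show ?thesis using x sk j by auto
    qed
    ultimately show "\<exists>k\<ge>N. \<sigma> k x \<in> (if b then A1 else A0)" by blast
  qed
  have "p x \<in> A1" using tendsto_frequently_closed[OF limx[OF \<open>x \<in> X\<close>] key[of True] ] cl1 by simp
  moreover have "p x \<in> A0" using tendsto_frequently_closed[OF limx[OF \<open>x \<in> X\<close>] key[of False] ] cl0 by simp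
  ultimately show False using disj by auto
qed


lemma indep_shift:
  assumes ind: "indep T X A0 A1 I" and TX: "T ` X \<subseteq> X" and sub: "(\<lambda>i. i + j) ` J \<subseteq> I"
  shows "indep T X A0 A1 J"
  unfolding indep_def
proof (intro allI impI)
  fix \<xi> assume "\<xi> \<subseteq> J"
  then have "(\<lambda>i. i + j) ` \<xi> \<subseteq> I" using sub by blast
  then obtain x where x: "x \<in> X" and hx: "\<forall>i\<in>I. (i \<in> (\<lambda>i. i + j) ` \<xi> \<longrightarrow> (T ^^ i) x \<in> A1) \<and> (i \<notin> (\<lambda>i. i + j) ` \<xi> \<longrightarrow> (T ^^ i) x \<in> A0)"
    using ind unfolding indep_def by blast
  have fpX: "(T ^^ m) y \<in> X" if "y \<in> X" for m y
    using that TX by (induction m) auto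
  show "\<exists>x\<in>X. \<forall>i\<in>J. (i \<in> \<xi> \<longrightarrow> (T ^^ i) x \<in> A1) \<and> (i \<notin> \<xi> \<longrightarrow> (T ^^ i) x \<in> A0)"
  proof (intro bexI[of _ "(T ^^ j) x"] ballI)
    fix i assume "i \<in> J"
    then have "i + j \<in> I" using sub by blast
    moreover have "(T ^^ i) ((T ^^ j) x) = (T ^^ (i + j)) x" by (simp add: funpow_add)
    moreover have "i + j \<in> (\<lambda>i. i + j) ` \<xi> \<longleftrightarrow> i \<in> \<xi>" by auto
    ultimately show "(i \<in> \<xi> \<longrightarrow> (T ^^ i) ((T ^^ j) x) \<in> A1) \<and> (i \<notin> \<xi> \<longrightarrow> (T ^^ i) ((T ^^ j) x) \<in> A0)"
      using hx by metis
  qed (use x fpX in auto)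
qed

lemma indep_mono:
  assumes "indep T X A0 A1 I" "T ` X \<subseteq> X" "J \<subseteq> I"
  shows "indep T X A0 A1 J"
  using indep_shift[OF assms(1,2), of 0 J] assms(3) by simp

lemma rising_sun:
  fixes I :: "nat set" and \<delta> :: real
  assumes I: "I \<subseteq> {..<n}" and d: "0 \<le> \<delta>" and cI: "real (card I) \<ge> 2 * \<delta> * n"
  shows "\<exists>j\<le>n. real (n - j) \<ge> \<delta> * n \<and> (\<forall>m. j + m \<le> n \<longrightarrow> real (card (I \<inter> {j..<j+m})) \<ge> \<delta> * m)"
proof -
  define S where "S k = real (card (I \<inter> {..<k})) - \<delta> * k" for k
  obtain j where j: "j \<in> {0..n}" "Min (S ` {0..n}) = S j"
    using obtains_MIN[of "{0..n}" S] by auto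
  have jmin: "S j \<le> S k" if "k \<le> n" for k
    using j(2) Min_le[of "S ` {0..n}" "S k"] that by auto
  have split: "card (I \<inter> {..<k}) = card (I \<inter> {..<j}) + card (I \<inter> {j..<k})" if "j \<le> k" for k
  proof -
    have "I \<inter> {..<k} = (I \<inter> {..<j}) \<union> (I \<inter> {j..<k})" using that by auto
    moreover have "(I \<inter> {..<j}) \<inter> (I \<inter> {j..<k}) = {}" by auto
    ultimately show ?thesis by (simp add: card_Un_disjoint)
  qed
  have main: "real (card (I \<inter> {j..<k})) \<ge> \<delta> * (real k - real j)" if "j \<le> k" "k \<le> n" for k
    using jmin[OF that(2)] split[OF that(1)] unfolding S_def by (simp add: algebra_simps)
  have Sn: "S n \<ge> \<delta> * n"
  proof -
    have "I \<inter> {..<n} = I" using I by auto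
    then show ?thesis unfolding S_def using cI by simp
  qed
  have S0: "S j \<le> 0" using jmin[of 0] by (simp add: S_def)
  have cnt: "real (card (I \<inter> {j..<n})) \<le> real n - real j"
  proof -
    have "card (I \<inter> {j..<n}) \<le> card {j..<n}" by (intro card_mono) auto
    then show ?thesis using j(1) by simp
  qed
  have "S n - S j = real (card (I \<inter> {j..<n})) - \<delta> * (real n - real j)"
    using split[of n] j(1) unfolding S_def by (simp add: algebra_simps)
  then have "real n - real j \<ge> \<delta> * n"
    using Sn S0 cnt d j(1) by (smt (verit, best) mult_nonneg_nonneg of_nat_mono atLeastAtMost_iff)
  moreover have "\<forall>m. j + m \<le> n \<longrightarrow> real (card (I \<inter> {j..<j+m})) \<ge> \<delta> * m"
  proof (intro allI impI)
    fix m assume "j + m \<le> n"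
    then show "real (card (I \<inter> {j..<j+m})) \<ge> \<delta> * m" using main[of "j+m"] by simp
  qed
  ultimately show ?thesis using j(1) by (intro exI[of _ j]) auto
qed

definition goodset :: "('a \<Rightarrow> 'a) \<Rightarrow> 'a set \<Rightarrow> 'a set \<Rightarrow> 'a set \<Rightarrow> real \<Rightarrow> nat \<Rightarrow> nat set \<Rightarrow> bool" where
  "goodset T X A0 A1 \<delta> l J \<longleftrightarrow> J \<subseteq> {..<l} \<and> indep T X A0 A1 J \<and> (\<forall>m\<le>l. real (card (J \<inter> {..<m})) \<ge> \<delta> * m)"

lemma long_good:
  fixes \<theta> :: real
  assumes TX: "T ` X \<subseteq> X" and th: "\<theta> > 0"
    and freq: "frequently (\<lambda>n. \<exists>I. I \<subseteq> {..<n} \<and> indep T X A0 A1 I \<and> real (card I) \<ge> \<theta> * n) sequentially"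
  shows "\<exists>l\<ge>N. \<exists>J. goodset T X A0 A1 (\<theta>/2) l J"
proof -
  define \<delta> where "\<delta> = \<theta>/2"
  have d: "\<delta> > 0" using th by (simp add: \<delta>_def)
  obtain n I where n: "n \<ge> nat \<lceil>N / \<delta>\<rceil>" and I: "I \<subseteq> {..<n}" "indep T X A0 A1 I" "real (card I) \<ge> \<theta> * n"
    using freq unfolding frequently_sequentially by blast
  have "real (card I) \<ge> 2 * \<delta> * n" using I(3) by (simp add: \<delta>_def)
  then obtain j where j: "j \<le> n" "real (n - j) \<ge> \<delta> * n"
    and dens: "\<forall>m. j + m \<le> n \<longrightarrow> real (card (I \<inter> {j..<j+m})) \<ge> \<delta> * m"
    using rising_sun[OF I(1), of \<delta>] d by auto
  define J where "J = {i. i + j \<in> I}"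
  have "real n \<ge> N / \<delta>" using n by linarith
  then have "\<delta> * n \<ge> N" using d by (simp add: field_simps)
  then have lN: "n - j \<ge> N" using j(2) by linarith
  have Jsub: "J \<subseteq> {..<n - j}" using I(1) unfolding J_def by auto
  have Jind: "indep T X A0 A1 J" by (rule indep_shift[OF I(2) TX]) (auto simp: J_def)
  have Jd: "real (card (J \<inter> {..<m})) \<ge> \<delta> * m" if "m \<le> n - j" for m
  proof -
    have "bij_betw (\<lambda>i. i + j) (J \<inter> {..<m}) (I \<inter> {j..<j+m})"
      unfolding bij_betw_def
    proof
      show "inj_on (\<lambda>i. i + j) (J \<inter> {..<m})" by (auto simp: inj_on_def)
      show "(\<lambda>i. i + j) ` (J \<inter> {..<m}) = I \<inter> {j..<j + m}"
      proof
        show "(\<lambda>i. i + j) ` (J \<inter> {..<m}) \<subseteq> I \<inter> {j..<j + m}" by (auto simp: J_def)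
        show "I \<inter> {j..<j + m} \<subseteq> (\<lambda>i. i + j) ` (J \<inter> {..<m})"
        proof
          fix y assume "y \<in> I \<inter> {j..<j + m}"
          then have "y - j \<in> J \<inter> {..<m}" "y = (y - j) + j" by (auto simp: J_def)
          then show "y \<in> (\<lambda>i. i + j) ` (J \<inter> {..<m})" by blast
        qed
      qed
    qed
    then have "card (J \<inter> {..<m}) = card (I \<inter> {j..<j+m})" by (rule bij_betw_same_card)
    then show ?thesis using dens that j(1) by auto
  qed
  show ?thesis
    using lN Jsub Jind Jd unfolding goodset_def \<delta>_def by blast
qed

lemma koenig:
  assumes TX: "T ` X \<subseteq> X" and d: "\<delta> > 0"
    and long: "\<And>N. \<exists>l\<ge>N. \<exists>J. goodset T X A0 A1 \<delta> l J"
  shows "\<exists>J. infinite J \<and> (\<forall>F. F \<subseteq> J \<and> finite F \<longrightarrow> indep T X A0 A1 F)"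
proof -
  define G where "G m B \<longleftrightarrow> (\<forall>N. \<exists>l\<ge>N. \<exists>J. goodset T X A0 A1 \<delta> l J \<and> l \<ge> m \<and> J \<inter> {..<m} = B)" for m B
  have G0: "G 0 {}" unfolding G_def using long by auto
  have Gsub: "B \<subseteq> {..<m}" if "G m B" for m B
    using that unfolding G_def by blast
  have Gstep: "\<exists>B'. G (Suc m) B' \<and> B' \<inter> {..<m} = B" if GB: "G m B" for m B
  proof (rule ccontr)
    assume "\<nexists>B'. G (Suc m) B' \<and> B' \<inter> {..<m} = B"
    moreover have "B \<inter> {..<m} = B" "insert m B \<inter> {..<m} = B" using Gsub[OF GB] by auto
    ultimately have "\<not> G (Suc m) B" "\<not> G (Suc m) (insert m B)" by auto
    then obtain N1 N2 where
      N1: "\<forall>l\<ge>N1. \<forall>J. goodset T X A0 A1 \<delta> l J \<and> l \<ge> Suc m \<longrightarrow> J \<inter> {..<Suc m} \<noteq> B" and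
      N2: "\<forall>l\<ge>N2. \<forall>J. goodset T X A0 A1 \<delta> l J \<and> l \<ge> Suc m \<longrightarrow> J \<inter> {..<Suc m} \<noteq> insert m B"
      unfolding G_def by blast
    obtain l J where l: "l \<ge> max (max N1 N2) (Suc m)" "goodset T X A0 A1 \<delta> l J" "J \<inter> {..<m} = B"
      using GB unfolding G_def by blast
    have "J \<inter> {..<Suc m} = B \<or> J \<inter> {..<Suc m} = insert m B"
      using l(3) by (auto simp: lessThan_Suc)
    moreover have "l \<ge> N1" "l \<ge> N2" "l \<ge> Suc m" using l(1) by auto
    ultimately show False using N1[rule_format, of l J] N2[rule_format, of l J] l(2) by blast
  qed
  define sq where "sq = rec_nat {} (\<lambda>m B. SOME B'. G (Suc m) B' \<and> B' \<inter> {..<m} = B)"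
  have sq0: "sq 0 = {}" by (simp add: sq_def)
  have sqS: "sq (Suc m) = (SOME B'. G (Suc m) B' \<and> B' \<inter> {..<m} = sq m)" for m by (simp add: sq_def)
  have sqG1: "G m (sq m)" for m
  proof (induction m)
    case 0
    then show ?case using G0 sq0 by simp
  next
    case (Suc m)
    have "\<exists>B'. G (Suc m) B' \<and> B' \<inter> {..<m} = sq m" using Gstep[OF Suc] .
    then have "G (Suc m) (sq (Suc m)) \<and> sq (Suc m) \<inter> {..<m} = sq m"
      unfolding sqS[of m] by (rule someI_ex)
    then show ?case by simp
  qed
  have sqG: "G m (sq m) \<and> (sq (Suc m) \<inter> {..<m} = sq m)" for m
  proof -
    have "\<exists>B'. G (Suc m) B' \<and> B' \<inter> {..<m} = sq m" using Gstep[OF sqG1[of m]] .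
    then have "G (Suc m) (sq (Suc m)) \<and> sq (Suc m) \<inter> {..<m} = sq m"
      unfolding sqS[of m] by (rule someI_ex)
    then show ?thesis using sqG1 by simp
  qed
  have coh: "sq (m + k) \<inter> {..<m} = sq m" for m k
  proof (induction k)
    case 0
    then show ?case using Gsub sqG by auto
  next
    case (Suc k)
    have "sq (Suc (m + k)) \<inter> {..<m} = sq (Suc (m + k)) \<inter> {..<m + k} \<inter> {..<m}" by auto
    also have "\<dots> = sq m" using sqG[of "m + k"] Suc by simp
    finally show ?case by simp
  qed
  define Ji where "Ji = (\<Union>m. sq m)"
  have Jcut: "Ji \<inter> {..<m} = sq m" for m
  proof
    show "sq m \<subseteq> Ji \<inter> {..<m}" using Gsub sqG unfolding Ji_def by blast
    show "Ji \<inter> {..<m} \<subseteq> sq m"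
    proof
      fix x assume "x \<in> Ji \<inter> {..<m}"
      then obtain m' where x: "x \<in> sq m'" "x < m" unfolding Ji_def by auto
      show "x \<in> sq m"
      proof (cases "m' \<le> m")
        case True
        then have "sq m \<inter> {..<m'} = sq m'" using coh[of m' "m - m'"] by simp
        then show ?thesis using x by auto
      next
        case False
        then have "sq m' \<inter> {..<m} = sq m" using coh[of m "m' - m"] by simp
        then show ?thesis using x by auto
      qed
    qed
  qed
  have witness: "\<exists>l J. goodset T X A0 A1 \<delta> l J \<and> l \<ge> m \<and> J \<inter> {..<m} = sq m" for m
    using sqG[of m] unfolding G_def by blast
  have indF: "indep T X A0 A1 F" if "F \<subseteq> Ji" "finite F" for F
  proof -
    obtain m where m: "F \<subseteq> {..<m}"
      using \<open>finite F\<close> finite_nat_bounded by blast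
    then have "F \<subseteq> sq m" using that Jcut[of m] by blast
    then obtain l J where "goodset T X A0 A1 \<delta> l J" "F \<subseteq> J" using witness[of m] by blast
    then show ?thesis using indep_mono[OF _ TX] unfolding goodset_def by blast
  qed
  have dens: "real (card (sq m)) \<ge> \<delta> * m" for m
    using witness[of m] unfolding goodset_def by force
  have "infinite Ji"
  proof
    assume fin: "finite Ji"
    obtain m :: nat where m: "real m > real (card Ji) / \<delta>" using reals_Archimedean2 by blast
    have "card (sq m) \<le> card Ji" using Jcut[of m] fin by (metis card_mono inf_le1)
    then have "\<delta> * m \<le> card Ji" using dens[of m] by linarith
    moreover have "\<delta> * m > card Ji" using m d by (simp add: field_simps)
    ultimately show False by linarith
  qed
  then show ?thesis using indF by blast
qed


definition shatters :: "'b set set \<Rightarrow> 'b set \<Rightarrow> bool" where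
  "shatters F I \<longleftrightarrow> (\<forall>\<xi>\<subseteq>I. \<exists>B\<in>F. B \<inter> I = \<xi>)"

lemma pajor:
  assumes "finite D" "F \<subseteq> Pow D"
  shows "card F \<le> card {I. I \<subseteq> D \<and> shatters F I}"
  using assms
proof (induction D arbitrary: F rule: finite_induct)
  case empty
  then have "F \<subseteq> {{}}" by auto
  show ?case
  proof (cases "F = {}")
    case True then show ?thesis by simp
  next
    case False
    then have "F = {{}}" using \<open>F \<subseteq> {{}}\<close> by auto
    moreover have "shatters {{}} {}" by (simp add: shatters_def)
    ultimately have "{I. I \<subseteq> {} \<and> shatters F I} = {{}}" by auto
    then show ?thesis using \<open>F = {{}}\<close> by simp
  qed
next
  case (insert a D)
  define F0 where "F0 = {B\<in>F. a \<notin> B}"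
  define F1 where "F1 = {B\<in>F. a \<in> B}"
  define H where "H = (\<lambda>B. B - {a}) ` F1"
  define G1 where "G1 = F0 \<union> H"
  define G2 where "G2 = F0 \<inter> H"
  have finF: "finite F" using insert.prems insert.hyps(1) by (meson finite_Pow_iff finite_insert finite_subset)
  have F01: "F = F0 \<union> F1" "F0 \<inter> F1 = {}" by (auto simp: F0_def F1_def)
  have cF: "card F = card F0 + card F1"
    using F01 finF by (metis card_Un_disjoint finite_Un)
  have injH: "inj_on (\<lambda>B. B - {a}) F1"
    unfolding inj_on_def F1_def by (metis insert_Diff mem_Collect_eq)
  have cH: "card H = card F1" unfolding H_def using card_image[OF injH] .
  have finH: "finite H" "finite F0" using finF by (auto simp: H_def F1_def F0_def)
  have cG: "card G1 + card G2 = card F" unfolding G1_def G2_def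
    using card_Un_Int[OF finH(2) finH(1)] cF cH by simp
  have G1D: "G1 \<subseteq> Pow D" using insert.prems by (auto simp: G1_def F0_def H_def F1_def)
  have G2D: "G2 \<subseteq> Pow D" using G1D by (auto simp: G1_def G2_def)
  have IH1: "card G1 \<le> card {I. I \<subseteq> D \<and> shatters G1 I}" using insert.IH[OF G1D] .
  have IH2: "card G2 \<le> card {I. I \<subseteq> D \<and> shatters G2 I}" using insert.IH[OF G2D] .
  define Sh1 where "Sh1 = {I. I \<subseteq> D \<and> shatters G1 I}"
  define Sh2 where "Sh2 = {I. I \<subseteq> D \<and> shatters G2 I}"
  have sh1: "shatters F I" if IS: "I \<in> Sh1" for I
    unfolding shatters_def
  proof (intro allI impI)
    fix \<xi> assume "\<xi> \<subseteq> I"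
    then obtain B where B: "B \<in> G1" "B \<inter> I = \<xi>" using IS unfolding Sh1_def shatters_def by blast
    have aI: "a \<notin> I" using IS insert.hyps(2) unfolding Sh1_def by auto
    show "\<exists>B\<in>F. B \<inter> I = \<xi>"
    proof (cases "B \<in> F0")
      case True then show ?thesis using B unfolding F0_def by auto
    next
      case False
      then obtain B' where "B' \<in> F1" "B = B' - {a}" using B(1) unfolding G1_def H_def by auto
      then show ?thesis using B aI unfolding F1_def by (intro bexI[of _ B']) auto
    qed
  qed
  have sh2: "shatters F (insert a I)" if IS: "I \<in> Sh2" for I
    unfolding shatters_def
  proof (intro allI impI)
    fix \<xi> assume xi: "\<xi> \<subseteq> insert a I"
    then have "\<xi> - {a} \<subseteq> I" by auto
    then obtain B where B: "B \<in> G2" "B \<inter> I = \<xi> - {a}" using IS unfolding Sh2_def shatters_def by blast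
    have aB: "a \<notin> B" "B \<in> F" using B(1) unfolding G2_def F0_def by auto
    obtain B' where B': "B' \<in> F1" "B = B' - {a}" using B(1) unfolding G2_def H_def by auto
    have iB: "insert a B \<in> F" using B' unfolding F1_def by (metis insert_Diff mem_Collect_eq)
    show "\<exists>B\<in>F. B \<inter> insert a I = \<xi>"
    proof (cases "a \<in> \<xi>")
      case True
      then show ?thesis using B(2) iB by (intro bexI[of _ "insert a B"]) auto
    next
      case False
      then show ?thesis using B(2) aB xi by (intro bexI[of _ B]) auto
    qed
  qed
  have disj: "Sh1 \<inter> insert a ` Sh2 = {}" using insert.hyps(2) unfolding Sh1_def by auto
  have inj2: "inj_on (insert a) Sh2"
    unfolding inj_on_def Sh2_def using insert.hyps(2) by (metis Diff_insert_absorb mem_Collect_eq subsetD)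
  have sub: "Sh1 \<union> insert a ` Sh2 \<subseteq> {I. I \<subseteq> insert a D \<and> shatters F I}"
    using sh1 sh2 unfolding Sh1_def Sh2_def by auto
  have finall: "finite {I. I \<subseteq> insert a D \<and> shatters F I}" using insert.hyps(1) by simp
  have "card F = card G1 + card G2" using cG by simp
  also have "\<dots> \<le> card Sh1 + card Sh2" using IH1 IH2 unfolding Sh1_def Sh2_def by simp
  also have "\<dots> = card (Sh1 \<union> insert a ` Sh2)"
    using disj card_image[OF inj2] finall sub
    by (metis (no_types, lifting) card_Un_disjoint finite_Un rev_finite_subset)
  also have "\<dots> \<le> card {I. I \<subseteq> insert a D \<and> shatters F I}"
    using card_mono[OF finall sub] .
  finally show ?case .
qed

lemma card_small_subsets:
  fixes t :: real
  assumes "finite D" "0 < t" "t \<le> 1"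
  shows "real (card {I. I \<subseteq> D \<and> card I \<le> m}) \<le> (1/t)^m * (1+t)^(card D)"
proof -
  have eq: "{I. I \<subseteq> D \<and> card I \<le> m} = (\<Union>j\<in>{..m}. {I. I \<subseteq> D \<and> card I = j})" by auto
  have "card {I. I \<subseteq> D \<and> card I \<le> m} \<le> (\<Sum>j\<le>m. card {I. I \<subseteq> D \<and> card I = j})"
    unfolding eq by (rule card_UN_le) simp
  also have "\<dots> = (\<Sum>j\<le>m. card D choose j)" using n_subsets[OF assms(1)] by simp
  finally have "real (card {I. I \<subseteq> D \<and> card I \<le> m}) \<le> real (\<Sum>j\<le>m. card D choose j)"
    by (rule of_nat_mono)
  then have c1: "real (card {I. I \<subseteq> D \<and> card I \<le> m}) \<le> (\<Sum>j\<le>m. real (card D choose j))"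
    by simp
  have c2: "(\<Sum>j\<le>m. real (card D choose j)) \<le> (\<Sum>j\<le>m. real (card D choose j) * (t^j * (1/t)^m))"
  proof (rule sum_mono)
    fix j assume "j \<in> {..m}"
    then have jm: "j \<le> m" by simp
    have e1: "(1/t)^m = (1/t)^(m-j) * (1/t)^j" using jm by (simp add: power_add[symmetric])
    have e2: "t^j * (1/t)^j = 1" using assms(2) by (simp add: power_one_over)
    have "t^j * (1/t)^m = (1/t)^(m - j)" unfolding e1 using e2 by (simp add: algebra_simps)
    moreover have "(1/t)^(m-j) \<ge> 1" using assms by (intro one_le_power) simp
    ultimately have "real (card D choose j) * 1 \<le> real (card D choose j) * (t^j * (1/t)^m)"
      by (intro mult_left_mono) auto
    then show "real (card D choose j) \<le> real (card D choose j) * (t^j * (1/t)^m)" by simp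
  qed
  have c3: "(\<Sum>j\<le>m. real (card D choose j) * (t^j * (1/t)^m)) = (1/t)^m * (\<Sum>j\<le>m. real (card D choose j) * t^j)"
    by (simp add: sum_distrib_left algebra_simps)
  have c4: "(\<Sum>j\<le>m. real (card D choose j) * t^j) \<le> (\<Sum>j\<le>m + card D. real (card D choose j) * t^j)"
    using assms by (intro sum_mono2) auto
  have c5: "(\<Sum>j\<le>m + card D. real (card D choose j) * t^j) = (\<Sum>j\<le>card D. real (card D choose j) * t^j)"
    by (rule sum.mono_neutral_right) auto
  have c6: "(\<Sum>j\<le>card D. real (card D choose j) * t^j) = (t + 1)^(card D)"
    by (simp add: binomial_ring)
  have "(1/t)^m * (\<Sum>j\<le>m. real (card D choose j) * t^j) \<le> (1/t)^m * (1 + t)^(card D)"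
    using c4 c5 c6 assms(2) by (intro mult_left_mono) (auto simp: add.commute)
  then show ?thesis using c1 c2 c3 by linarith
qed

lemma pigeonhole_fiber:
  assumes "finite S" "finite K" "f ` S \<subseteq> K" "S \<noteq> {}"
  shows "\<exists>k\<in>K. card S \<le> card K * card {x\<in>S. f x = k}"
proof (rule ccontr)
  assume "\<not> ?thesis"
  then have lt: "card K * card {x\<in>S. f x = k} < card S" if "k \<in> K" for k using that by auto
  have "S = (\<Union>k\<in>K. {x\<in>S. f x = k})" using assms(3) by auto
  then have "card S \<le> (\<Sum>k\<in>K. card {x\<in>S. f x = k})"
    by (metis assms(2) card_UN_le)
  then have "card K * card S \<le> (\<Sum>k\<in>K. card K * card {x\<in>S. f x = k})"
    by (metis mult_le_mono2 sum_distrib_left)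
  also have "\<dots> < (\<Sum>k\<in>K. card S)"
  proof (rule sum_strict_mono)
    show "K \<noteq> {}" using assms(3,4) by auto
  qed (use assms(2) lt in auto)
  finally show False by simp
qed


lemma core_count:
  fixes X :: "'a::metric_space set" and Y :: "'a set" and \<theta> t \<epsilon> :: real and M n :: nat
  assumes TX: "T ` X \<subseteq> X" and eps: "\<epsilon> > 0"
    and Yfin: "finite Y" and Ynet: "\<And>x. x \<in> X \<Longrightarrow> \<exists>y\<in>Y. dist x y < \<epsilon>/4"
    and M1: "M \<ge> 1" and th: "\<theta> > 0" and thM: "1 \<le> \<theta> * M"
    and t: "0 < t" "t \<le> 1"
    and Sfin: "finite S" and Ssep: "separated_set X T n \<epsilon> S"
    and big: "real (card S) > real M * ((1/t)^(nat \<lfloor>\<theta> * (n * card Y)\<rfloor>) * (1+t)^(n * card Y))^2"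
  shows "\<exists>y\<in>Y. \<exists>s<M. \<exists>I\<subseteq>{..<n}.
           indep T X (- ball y (\<epsilon>/4 + s * (\<epsilon>/(2*M)) + \<epsilon>/(2*M))) (cball y (\<epsilon>/4 + s * (\<epsilon>/(2*M)))) I
           \<and> real (card I) \<ge> \<theta> * n"
proof -
  define L where "L = n * card Y"
  define \<eta> where "\<eta> = \<epsilon>/(2*M)"
  define r where "r s = \<epsilon>/4 + real s * \<eta>" for s :: nat
  define m1 where "m1 = nat \<lfloor>\<theta> * L\<rfloor>"
  define Bd where "Bd = (1/t)^m1 * (1+t)^L"
  have Mpos: "real M > 0" using M1 by simp
  have eta: "\<eta> > 0" using eps Mpos by (simp add: \<eta>_def)
  have rs_lo: "r s \<ge> \<epsilon>/4" for s using eta by (simp add: r_def)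
  have rs_hi: "r s + \<eta> \<le> 3*\<epsilon>/4" if "s < M" for s
  proof -
    have "real (Suc s) \<le> real M" using that by simp
    then have "real (Suc s) * \<eta> \<le> real M * \<eta>" using eta by (intro mult_right_mono) auto
    also have "real M * \<eta> = \<epsilon>/2" using Mpos by (simp add: \<eta>_def)
    finally show ?thesis by (simp add: r_def algebra_simps)
  qed
  have rmono: "r s + \<eta> \<le> r s'" if "s < s'" for s s'
  proof -
    have "real s + 1 \<le> real s'" using that by simp
    then have "(real s + 1) * \<eta> \<le> real s' * \<eta>" using eta by (intro mult_right_mono) auto
    then show ?thesis by (simp add: r_def algebra_simps)
  qed
  have fpX: "(T ^^ m) x \<in> X" if "x \<in> X" for m x
    using that TX by (induction m) auto
  have SX: "S \<subseteq> X" and sep: "\<And>x y. x \<in> S \<Longrightarrow> y \<in> S \<Longrightarrow> x \<noteq> y \<Longrightarrow> \<exists>i<n. dist ((T ^^ i) x) ((T ^^ i) y) > \<epsilon>"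
    using Ssep unfolding separated_set_def by auto
  define U where "U = {..<n} \<times> Y"
  have Ufin: "finite U" using Yfin by (simp add: U_def)
  have cU: "card U = L" by (simp add: U_def L_def card_cartesian_product)
  define d where "d x p = dist ((T ^^ fst p) x) (snd p)" for x p
  define star where "star s x = {p\<in>U. r s < d x p \<and> d x p \<le> r s + \<eta>}" for s x
  define one where "one s x = {p\<in>U. d x p \<le> r s}" for s x
  have Bd1: "Bd \<ge> 1"
  proof -
    have "(1/t)^m1 \<ge> 1" using t by (intro one_le_power) simp
    moreover have "(1+t)^L \<ge> 1" using t by (intro one_le_power) simp
    ultimately have "1 * 1 \<le> (1/t)^m1 * (1+t)^L" by (intro mult_mono) auto
    then show ?thesis unfolding Bd_def by simp
  qed
  have bigS: "real (card S) > real M * Bd^2" using big by (simp add: Bd_def m1_def L_def)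
  have "Bd^2 \<ge> 1" using Bd1 by (simp add: one_le_power)
  then have "1 * 1 \<le> real M * Bd^2" using M1 by (intro mult_mono) auto
  then have "\<not> card S \<le> Suc 0" using bigS by linarith
  then obtain x1 x2 where x12: "x1 \<in> S" "x2 \<in> S" "x1 \<noteq> x2"
    using card_le_Suc0_iff_eq[OF Sfin] by blast
  then obtain i0 where "i0 < n" using sep by blast
  then have npos: "n > 0" by simp
  obtain y0 where "y0 \<in> Y" using Ynet x12(1) SX by blast
  then have Ypos: "card Y > 0" using Yfin card_gt_0_iff by blast
  have Lpos: "L > 0" using npos Ypos by (simp add: L_def)
  have claim1: "\<exists>s<M. real (card (star s x)) \<le> \<theta> * L" for x
  proof (rule ccontr)
    assume "\<not> ?thesis"
    then have gt: "real (card (star s x)) > \<theta> * L" if "s < M" for s using that by auto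
    have disj: "star s x \<inter> star s' x = {}" if "s \<noteq> s'" for s s'
    proof (cases "s < s'")
      case True then show ?thesis using rmono[OF True] unfolding star_def by auto
    next
      case False then have "s' < s" using that by simp
      then show ?thesis using rmono[of s' s] unfolding star_def by auto
    qed
    have "card (\<Union>s\<in>{..<M}. star s x) = (\<Sum>s<M. card (star s x))"
      by (rule card_UN_disjoint) (use Ufin disj in \<open>auto simp: star_def\<close>)
    moreover have "card (\<Union>s\<in>{..<M}. star s x) \<le> L"
      using cU Ufin by (metis (no_types, lifting) UN_subset_iff card_mono mem_Collect_eq star_def subsetI)
    ultimately have "(\<Sum>s<M. real (card (star s x))) \<le> real L"
      by (metis of_nat_le_iff of_nat_sum)
    moreover have "(\<Sum>s<M. \<theta> * L) < (\<Sum>s<M. real (card (star s x)))"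
      using gt M1 by (intro sum_strict_mono) (auto simp: lessThan_empty_iff)
    moreover have "(\<Sum>s<M. \<theta> * L) = \<theta> * M * L" by simp
    moreover have "\<theta> * M * L \<ge> L" using thM by (simp add: mult_right_mono[OF thM, of "real L", simplified])
    ultimately show False by linarith
  qed
  define sx where "sx x = (SOME s. s < M \<and> real (card (star s x)) \<le> \<theta> * L)" for x
  have sx: "sx x < M" "real (card (star (sx x) x)) \<le> \<theta> * L" for x
    using someI_ex[OF claim1[of x]] unfolding sx_def by auto
  define key where "key x = (sx x, star (sx x) x)" for x
  define Keys where "Keys = {..<M} \<times> {T. T \<subseteq> U \<and> card T \<le> m1}"
  have keyK: "key ` S \<subseteq> Keys"
  proof
    fix k assume "k \<in> key ` S"
    then obtain x where k: "k = key x" by auto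
    have "card (star (sx x) x) \<le> m1" using sx(2)[of x] unfolding m1_def by linarith
    then show "k \<in> Keys" unfolding k key_def Keys_def using sx(1)[of x] by (auto simp: star_def)
  qed
  have Kfin: "finite Keys" using Ufin by (simp add: Keys_def)
  have cK: "real (card Keys) \<le> real M * Bd"
  proof -
    have "real (card {T. T \<subseteq> U \<and> card T \<le> m1}) \<le> Bd"
      using card_small_subsets[OF Ufin t, of m1] cU by (simp add: Bd_def)
    then show ?thesis unfolding Keys_def card_cartesian_product by (simp add: mult_left_mono)
  qed
  have Sne: "S \<noteq> {}" using x12 by auto
  obtain k where k: "k \<in> Keys" and kS: "card S \<le> card Keys * card {x\<in>S. key x = k}"
    using pigeonhole_fiber[OF Sfin Kfin keyK Sne] by blast
  obtain s T0 where kst: "k = (s, T0)" by fastforce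
  define G where "G = {x\<in>S. key x = k}"
  have Gprop: "sx x = s" "star s x = T0" if "x \<in> G" for x
    using that unfolding G_def key_def kst by auto
  have sM: "s < M" using k unfolding kst Keys_def by auto
  define D where "D = U - T0"
  define F where "F = one s ` G"
  have FD: "F \<subseteq> Pow D"
  proof
    fix B assume "B \<in> F"
    then obtain x where x: "x \<in> G" "B = one s x" unfolding F_def by auto
    have "one s x \<inter> star s x = {}" unfolding one_def star_def by auto
    then show "B \<in> Pow D" using x Gprop[OF x(1)] unfolding D_def one_def by auto
  qed
  have injG: "inj_on (one s) G"
  proof (rule inj_onI)
    fix x x' assume xx: "x \<in> G" "x' \<in> G" "one s x = one s x'"
    show "x = x'"
    proof (rule ccontr)
      assume "x \<noteq> x'"
      moreover have "x \<in> S" "x' \<in> S" using xx unfolding G_def by auto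
      ultimately obtain i where i: "i < n" "dist ((T ^^ i) x) ((T ^^ i) x') > \<epsilon>" using sep by blast
      have "(T ^^ i) x \<in> X" using fpX SX \<open>x \<in> S\<close> by blast
      then obtain y where y: "y \<in> Y" "dist ((T ^^ i) x) y < \<epsilon>/4" using Ynet by blast
      have "(i, y) \<in> U" using i y unfolding U_def by auto
      have "d x (i, y) \<le> r s" using y rs_lo[of s] unfolding d_def by simp
      then have "(i, y) \<in> one s x" using \<open>(i, y) \<in> U\<close> unfolding one_def by simp
      moreover have "d x' (i, y) > r s"
      proof -
        have "dist ((T ^^ i) x) ((T ^^ i) x') \<le> dist ((T ^^ i) x) y + dist ((T ^^ i) x') y"
          by (rule dist_triangle2)
        then have "d x' (i, y) > 3*\<epsilon>/4" using i y unfolding d_def by simp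
        then show ?thesis using rs_hi[OF sM] eta by simp
      qed
      then have "(i, y) \<notin> one s x'" unfolding one_def by simp
      ultimately show False using xx(3) by simp
    qed
  qed
  have cF: "card F = card G" unfolding F_def using card_image[OF injG] .
  have Dfin: "finite D" using Ufin by (simp add: D_def)
  have paj: "card F \<le> card {I. I \<subseteq> D \<and> shatters F I}" using pajor[OF Dfin FD] .
  have "\<exists>I. I \<subseteq> D \<and> shatters F I \<and> real (card I) \<ge> \<theta> * L"
  proof (rule ccontr)
    assume "\<not> ?thesis"
    then have "{I. I \<subseteq> D \<and> shatters F I} \<subseteq> {I. I \<subseteq> U \<and> card I \<le> m1}"
      unfolding D_def m1_def by (auto simp: le_nat_floor)
    then have "card {I. I \<subseteq> D \<and> shatters F I} \<le> card {I. I \<subseteq> U \<and> card I \<le> m1}"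
      by (intro card_mono) (use Ufin in auto)
    moreover have "real (card {I. I \<subseteq> U \<and> card I \<le> m1}) \<le> Bd"
      using card_small_subsets[OF Ufin t, of m1] cU by (simp add: Bd_def)
    ultimately have cG: "real (card G) \<le> Bd" using paj cF by linarith
    have "real (card S) \<le> real (card Keys) * real (card G)" using kS unfolding G_def
      by (metis of_nat_le_iff of_nat_mult)
    also have "\<dots> \<le> (real M * Bd) * Bd"
      using cK cG by (intro mult_mono) auto
    finally show False using bigS by (simp add: power2_eq_square)
  qed
  then obtain I where I: "I \<subseteq> D" "shatters F I" "real (card I) \<ge> \<theta> * L" by blast
  have IU: "I \<subseteq> U" using I(1) unfolding D_def by auto
  have Ifin: "finite I" using IU Ufin finite_subset by blast
  have "real (card I) > 0" using I(3) th Lpos by (smt (verit) mult_pos_pos of_nat_0_less_iff)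
  then have Ine: "I \<noteq> {}" by auto
  have sndI: "snd ` I \<subseteq> Y" using IU unfolding U_def by auto
  obtain y where y: "y \<in> Y" and yI: "card I \<le> card Y * card {p\<in>I. snd p = y}"
    using pigeonhole_fiber[OF Ifin Yfin sndI Ine] by blast
  define Iy where "Iy = {i. (i, y) \<in> I}"
  have "bij_betw (\<lambda>i. (i, y)) Iy {p\<in>I. snd p = y}"
    unfolding bij_betw_def inj_on_def Iy_def by auto
  then have cIy: "card Iy = card {p\<in>I. snd p = y}" by (rule bij_betw_same_card)
  have "real (card I) \<le> real (card Y) * real (card Iy)" using yI cIy by (metis of_nat_le_iff of_nat_mult)
  moreover have "\<theta> * real L = \<theta> * n * card Y" by (simp add: L_def)
  ultimately have "\<theta> * n * card Y \<le> real (card Y) * real (card Iy)" using I(3) by linarith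
  then have cardIy: "\<theta> * n \<le> real (card Iy)" using Ypos by (simp add: mult.commute)
  have Iyn: "Iy \<subseteq> {..<n}" using IU unfolding Iy_def U_def by auto
  have indy: "indep T X (- ball y (r s + \<eta>)) (cball y (r s)) Iy"
    unfolding indep_def
  proof (intro allI impI)
    fix \<xi> assume xi: "\<xi> \<subseteq> Iy"
    then have "(\<lambda>i. (i, y)) ` \<xi> \<subseteq> I" unfolding Iy_def by auto
    then obtain B where B: "B \<in> F" "B \<inter> I = (\<lambda>i. (i, y)) ` \<xi>" using I(2) unfolding shatters_def by blast
    then obtain x where x: "x \<in> G" "B = one s x" unfolding F_def by auto
    have xX: "x \<in> X" using x(1) SX unfolding G_def by auto
    show "\<exists>x\<in>X. \<forall>i\<in>Iy. (i \<in> \<xi> \<longrightarrow> (T ^^ i) x \<in> cball y (r s)) \<and> (i \<notin> \<xi> \<longrightarrow> (T ^^ i) x \<in> - ball y (r s + \<eta>))"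
    proof (intro bexI[OF _ xX] ballI conjI impI)
      fix i assume iI: "i \<in> Iy"
      then have iyI: "(i, y) \<in> I" unfolding Iy_def by simp
      then have nst: "(i, y) \<notin> star s x" "(i, y) \<in> U" using I(1) Gprop[OF x(1)] IU unfolding D_def by auto
      {
        assume "i \<in> \<xi>"
        then have "(i, y) \<in> one s x" using B(2) x(2) by blast
        then show "(T ^^ i) x \<in> cball y (r s)" unfolding one_def d_def by (simp add: dist_commute)
      next
        assume "i \<notin> \<xi>"
        then have "(i, y) \<notin> one s x" using B(2) x(2) iyI by blast
        then have "d x (i, y) > r s + \<eta>" using nst unfolding one_def star_def by auto
        then show "(T ^^ i) x \<in> - ball y (r s + \<eta>)" unfolding d_def by (simp add: dist_commute)
      }
    qed
  qed
  show ?thesis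
    using y sM Iyn indy cardIy unfolding r_def \<eta>_def by (intro bexI[OF _ y] exI[of _ s]) auto
qed

lemma bound_calc:
  fixes c t \<theta> \<gamma> :: real and n K M :: nat
  assumes K: "K > 0" and gam: "\<gamma> = c / K" and c: "c > 0" and tdef: "t = \<gamma>/4" and t1: "t \<le> 1"
    and th: "\<theta> > 0" and thl: "\<theta> * ln (1/t) \<le> \<gamma>/8" and lnpos: "ln (1/t) > 0"
    and M: "M \<ge> 1" and n: "c * n / 4 > ln M"
  shows "real M * ((1/t)^(nat \<lfloor>\<theta> * (n * K)\<rfloor>) * (1+t)^(n * K))^2 < exp (c * n)"
proof -
  define L where "L = real (n * K)"
  define m1 where "m1 = nat \<lfloor>\<theta> * (n * K)\<rfloor>"
  have tpos: "t > 0" using tdef gam c K by simp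
  have gL: "\<gamma> * L = c * n" using K unfolding gam L_def by simp
  have m1le: "real m1 \<le> \<theta> * L" unfolding m1_def L_def using th by simp
  have "(1/t)^m1 = exp (real m1 * ln (1/t))" using tpos by (simp add: exp_of_nat_mult)
  also have "\<dots> \<le> exp (\<theta> * L * ln (1/t))" using m1le lnpos by (intro exp_mono mult_right_mono) auto
  also have "\<theta> * L * ln (1/t) \<le> \<gamma>/8 * L"
    using thl unfolding L_def by (metis mult.commute mult.left_commute mult_right_mono of_nat_0_le_iff)
  finally have b1: "(1/t)^m1 \<le> exp (\<gamma>/8 * L)" by simp
  have "(1+t)^(n*K) \<le> exp t ^ (n*K)"
    using tpos by (intro power_mono) (auto simp: add.commute)
  also have "\<dots> = exp (L * t)" unfolding L_def by (simp add: exp_of_nat_mult[symmetric])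
  also have "L * t = \<gamma>/4 * L" using tdef by simp
  finally have b2: "(1+t)^(n*K) \<le> exp (\<gamma>/4 * L)" .
  have "(1/t)^m1 * (1+t)^(n*K) \<le> exp (\<gamma>/8 * L) * exp (\<gamma>/4 * L)"
    using b1 b2 tpos by (intro mult_mono) auto
  also have "\<dots> = exp (3/8 * (c * n))" using gL by (simp add: exp_add[symmetric] algebra_simps)
  finally have bd: "(1/t)^m1 * (1+t)^(n*K) \<le> exp (3/8 * (c * n))" .
  have bd2: "((1/t)^m1 * (1+t)^(n*K))^2 \<le> exp (3/4 * (c * n))"
  proof -
    have "((1/t)^m1 * (1+t)^(n*K))^2 \<le> (exp (3/8 * (c * n)))^2"
      using bd tpos by (intro power_mono) auto
    also have "\<dots> = exp (3/4 * (c * n))" by (simp add: power2_eq_square exp_add[symmetric])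
    finally show ?thesis .
  qed
  have Mlt: "real M < exp (c * n / 4)"
    using n M by (metis exp_less_mono exp_ln of_nat_0_less_iff less_le_trans zero_less_one)
  have "real M * ((1/t)^m1 * (1+t)^(n*K))^2 < exp (c * n / 4) * exp (3/4 * (c * n))"
    using Mlt bd2 tpos by (intro mult_less_le_imp_less) auto
  also have "\<dots> = exp (c * n)" by (simp add: exp_add[symmetric])
  finally show ?thesis unfolding m1_def .
qed

lemma step2:
  fixes X :: "'a::metric_space set" and \<epsilon> c :: real
  assumes X: "compact X" and TX: "T ` X \<subseteq> X" and eps: "\<epsilon> > 0" and c: "c > 0" "c \<le> 1"
  shows "\<exists>P (\<theta>::real) N0. finite P \<and> \<theta> > 0 \<and> (\<forall>p\<in>P. closed (fst p) \<and> closed (snd p) \<and> fst p \<inter> snd p = {}) \<and>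
     (\<forall>n\<ge>N0. \<forall>S. finite S \<and> separated_set X T n \<epsilon> S \<and> real (card S) > exp (c * n) \<longrightarrow>
        (\<exists>p\<in>P. \<exists>I\<subseteq>{..<n}. indep T X (fst p) (snd p) I \<and> real (card I) \<ge> \<theta> * n))"
proof -
  obtain Y where Y: "Y \<subseteq> X" "finite Y" "X \<subseteq> (\<Union>y\<in>Y. ball y (\<epsilon>/4))"
    using compactE_image[OF X, of X "\<lambda>x. ball x (\<epsilon>/4)"] eps by force
  have Ynet: "\<exists>y\<in>Y. dist x y < \<epsilon>/4" if xX: "x \<in> X" for x
  proof -
    obtain y where "y \<in> Y" "x \<in> ball y (\<epsilon>/4)" using Y(3) xX by blast
    then show ?thesis by (auto simp: dist_commute)
  qed
  show ?thesis
  proof (cases "card Y = 0")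
    case True
    then have "X = {}" using Y by auto
    then have "\<forall>S. separated_set X T n \<epsilon> S \<longrightarrow> S = {}" for n unfolding separated_set_def by auto
    then have "\<not> (finite S \<and> separated_set X T n \<epsilon> S \<and> real (card S) > exp (c * n))" for n S
      by (metis card.empty exp_gt_zero not_less_iff_gr_or_eq of_nat_0)
    then show ?thesis by (intro exI[of _ "{}"] exI[of _ 1] exI[of _ 0]) auto
  next
    case False
    define K where "K = card Y"
    have K: "K > 0" using False by (simp add: K_def)
    define \<gamma> where "\<gamma> = c / K"
    define t where "t = \<gamma> / 4"
    define \<theta> where "\<theta> = \<gamma> / (8 * (ln (1/t) + 1))"
    define M where "M = nat \<lceil>1/\<theta>\<rceil>"
    have g: "\<gamma> > 0" "\<gamma> \<le> 1" using c K by (auto simp: \<gamma>_def field_simps)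
    have tpos: "t > 0" "t \<le> 1/4" using g by (auto simp: t_def)
    have lnpos: "ln (1/t) > 0" using tpos by simp
    have th: "\<theta> > 0" using g lnpos by (simp add: \<theta>_def)
    have ne: "ln (1/t) + 1 \<noteq> 0" using lnpos by simp
    have "\<theta> * (ln (1/t) + 1) = \<gamma>/8" unfolding \<theta>_def using ne by (simp add: divide_simps)
    then have thl: "\<theta> * ln (1/t) \<le> \<gamma>/8" using th by (simp add: algebra_simps)
    have "1/\<theta> > 0" using th by simp
    then have "0 < \<lceil>1/\<theta>\<rceil>" by linarith
    then have M1: "M \<ge> 1" unfolding M_def by linarith
    have thM: "1 \<le> \<theta> * M"
    proof -
      have "real M \<ge> 1/\<theta>" unfolding M_def by linarith
      then show ?thesis using th by (simp add: field_simps)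
    qed
    define r where "r s = \<epsilon>/4 + real s * (\<epsilon>/(2*M))" for s :: nat
    define P where "P = (\<lambda>(y, s). (- ball y (r s + \<epsilon>/(2*M)), cball y (r s))) ` (Y \<times> {..<M})"
    define N0 where "N0 = nat \<lceil>4 * ln M / c\<rceil> + 1"
    have Pfin: "finite P" using Y(2) by (simp add: P_def)
    have Pok: "\<forall>p\<in>P. closed (fst p) \<and> closed (snd p) \<and> fst p \<inter> snd p = {}"
    proof
      fix p assume "p \<in> P"
      then obtain y s where p: "p = (- ball y (r s + \<epsilon>/(2*M)), cball y (r s))" unfolding P_def by auto
      have "\<epsilon>/(2*M) > 0" using eps M1 by simp
      then show "closed (fst p) \<and> closed (snd p) \<and> fst p \<inter> snd p = {}"
        unfolding p by (auto simp: closed_Compl)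
    qed
    have main: "\<exists>p\<in>P. \<exists>I\<subseteq>{..<n}. indep T X (fst p) (snd p) I \<and> real (card I) \<ge> \<theta> * n"
      if n: "n \<ge> N0" and S: "finite S" "separated_set X T n \<epsilon> S" "real (card S) > exp (c * n)" for n S
    proof -
      have "real n > 4 * ln M / c" using n unfolding N0_def by linarith
      then have nb: "c * n / 4 > ln M" using c by (simp add: field_simps)
      have "real M * ((1/t)^(nat \<lfloor>\<theta> * (n * card Y)\<rfloor>) * (1+t)^(n * card Y))^2 < exp (c * n)"
        using bound_calc[OF K \<gamma>_def c(1) t_def _ th thl lnpos M1 nb] tpos unfolding K_def by simp
      then have big: "real (card S) > real M * ((1/t)^(nat \<lfloor>\<theta> * (n * card Y)\<rfloor>) * (1+t)^(n * card Y))^2"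
        using S(3) by linarith
      obtain y s I where ysI: "y \<in> Y" "s < M" "I \<subseteq> {..<n}"
        "indep T X (- ball y (\<epsilon>/4 + s * (\<epsilon>/(2*M)) + \<epsilon>/(2*M))) (cball y (\<epsilon>/4 + s * (\<epsilon>/(2*M)))) I"
        "real (card I) \<ge> \<theta> * n"
        using core_count[OF TX eps Y(2) Ynet M1 th thM tpos(1) _ S(1,2) big] tpos by auto
      have "(- ball y (r s + \<epsilon>/(2*M)), cball y (r s)) \<in> P" unfolding P_def using ysI(1,2) by auto
      moreover have "indep T X (- ball y (r s + \<epsilon>/(2*M))) (cball y (r s)) I"
        using ysI(4) by (simp add: r_def)
      ultimately show ?thesis using ysI(3,5)
        by (intro bexI[of _ "(- ball y (r s + \<epsilon>/(2*M)), cball y (r s))"] exI[of _ I]) simp_all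
    qed
    have fin: "\<forall>n\<ge>N0. \<forall>S. finite S \<and> separated_set X T n \<epsilon> S \<and> real (card S) > exp (c * n) \<longrightarrow>
        (\<exists>p\<in>P. \<exists>I\<subseteq>{..<n}. indep T X (fst p) (snd p) I \<and> real (card I) \<ge> \<theta> * n)"
    proof (intro allI impI)
      fix n S assume A: "N0 \<le> n" "finite S \<and> separated_set X T n \<epsilon> S \<and> real (card S) > exp (c * n)"
      then show "\<exists>p\<in>P. \<exists>I\<subseteq>{..<n}. indep T X (fst p) (snd p) I \<and> real (card I) \<ge> \<theta> * n"
        using main[of n S] by blast
    qed
    show ?thesis by (intro exI[of _ P] exI[of _ \<theta>] exI[of _ N0] conjI Pfin th Pok fin)
  qed
qed


lemma frequently_finite_pigeon:
  assumes "finite P" "frequently (\<lambda>n. \<exists>p\<in>P. Q p n) F"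
  shows "\<exists>p\<in>P. frequently (Q p) F"
proof (rule ccontr)
  assume "\<not> ?thesis"
  then have "\<forall>p\<in>P. eventually (\<lambda>n. \<not> Q p n) F" by (simp add: not_frequently)
  then have "eventually (\<lambda>n. \<forall>p\<in>P. \<not> Q p n) F" by (rule eventually_ball_finite[OF assms(1)])
  then show False using assms(2) by (simp add: frequently_def)
qed

lemma big_sep_set:
  fixes X :: "'a::metric_space set"
  assumes "real (max_sep X T n \<epsilon>) > r"
  shows "\<exists>S. finite S \<and> separated_set X T n \<epsilon> S \<and> real (card S) > r"
proof -
  define A where "A = {card S | S. finite S \<and> separated_set X T n \<epsilon> S}"
  have ms: "max_sep X T n \<epsilon> = Sup A" by (simp add: max_sep_def A_def)
  have "\<exists>a\<in>A. real a > r"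
  proof (cases "finite A")
    case True
    have "{} \<in> {S. finite S \<and> separated_set X T n \<epsilon> S}" by (simp add: separated_set_def)
    then have "A \<noteq> {}" unfolding A_def by blast
    then have "Sup A \<in> A" using True by (simp add: cSup_eq_Max)
    then show ?thesis using assms ms by metis
  next
    case False
    then obtain a where "a \<in> A" "a > nat \<lceil>r\<rceil>" using infinite_nat_iff_unbounded by blast
    moreover have "real (nat \<lceil>r\<rceil>) \<ge> r" by linarith
    ultimately show ?thesis by (intro bexI[of _ a]) auto
  qed
  then show ?thesis unfolding A_def by blast
qed

theorem mainTheorem5:
  fixes X :: "'a::metric_space set" and T :: "'a \<Rightarrow> 'a"
  assumes "compact X"
    and "homeomorphism X X T (inv_into X T)"
    and "minimal_system X T"
    and "tame X T"
  shows "topological_entropy X T = 0"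
proof -
  have TX: "T ` X \<subseteq> X" and cont: "continuous_on X T"
    using assms(2) unfolding homeomorphism_def by auto
  have Fr: "Frechet_space (subtopology (ptwise_top X) (enveloping_semigroup X T))"
    using assms(4) unfolding tame_def by blast
  define f where "f \<epsilon> n = ereal (ln (real (max_sep X T n \<epsilon>)) / real n)" for \<epsilon> n
  have te: "topological_entropy X T = (SUP \<epsilon>\<in>{0<..}. limsup (f \<epsilon>))"
    unfolding topological_entropy_def f_def ..
  have fnn: "f \<epsilon> n \<ge> 0" for \<epsilon> n
  proof -
    have "ln (real (max_sep X T n \<epsilon>)) \<ge> 0"
      by (cases "max_sep X T n \<epsilon> = 0") auto
    then show ?thesis unfolding f_def by simp
  qed
  have ge: "topological_entropy X T \<ge> 0"
  proof -
    have "0 \<le> limsup (f 1)" by (rule le_Limsup) (auto simp: fnn)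
    also have "limsup (f 1) \<le> (SUP \<epsilon>\<in>{0<..}. limsup (f \<epsilon>))" by (rule SUP_upper) simp
    finally show ?thesis using te by simp
  qed
  have le: "limsup (f \<epsilon>) \<le> 0" if eps: "\<epsilon> \<in> {0<..}" for \<epsilon>
  proof (rule ccontr)
    assume "\<not> limsup (f \<epsilon>) \<le> 0"
    then have "0 < limsup (f \<epsilon>)" by simp
    then obtain c0 where c0: "0 < ereal c0" "ereal c0 < limsup (f \<epsilon>)" using ereal_dense2 by blast
    have fr0: "frequently (\<lambda>n. f \<epsilon> n > ereal c0) sequentially"
    proof (rule ccontr)
      assume "\<not> ?thesis"
      then have "eventually (\<lambda>n. f \<epsilon> n \<le> ereal c0) sequentially" by (simp add: not_frequently not_less)
      then have "limsup (f \<epsilon>) \<le> ereal c0" by (rule Limsup_bounded)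
      then show False using c0 by simp
    qed
    define c where "c = min c0 1"
    have c: "c > 0" "c \<le> 1" using c0 by (auto simp: c_def)
    have fr1: "frequently (\<lambda>n. \<exists>S. finite S \<and> separated_set X T n \<epsilon> S \<and> real (card S) > exp (c * n)) sequentially"
      using fr0
    proof (rule frequently_elim1)
      fix n assume "f \<epsilon> n > ereal c0"
      then have h: "ln (real (max_sep X T n \<epsilon>)) / real n > c0" by (simp add: f_def)
      then have npos: "n > 0" using c0 by (cases "n = 0") auto
      then have "ln (real (max_sep X T n \<epsilon>)) > c0 * n" using h by (simp add: field_simps)
      moreover have "c0 * n \<ge> c * n" using c0 by (simp add: c_def mult_right_mono)
      ultimately have l: "ln (real (max_sep X T n \<epsilon>)) > c * n" by linarith
      have "c * n > 0" using c npos by simp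
      then have mpos: "max_sep X T n \<epsilon> > 0" using l by (cases "max_sep X T n \<epsilon> = 0") auto
      then have "real (max_sep X T n \<epsilon>) > exp (c * n)"
        using l by (metis exp_less_cancel_iff exp_ln of_nat_0_less_iff)
      then show "\<exists>S. finite S \<and> separated_set X T n \<epsilon> S \<and> real (card S) > exp (c * n)"
        by (rule big_sep_set)
    qed
    have epos: "\<epsilon> > 0" using eps by simp
    obtain P and \<theta> :: real and N0 where P: "finite P" "\<theta> > 0"
      "\<forall>p\<in>P. closed (fst p) \<and> closed (snd p) \<and> fst p \<inter> snd p = {}"
      and PN: "\<forall>n\<ge>N0. \<forall>S. finite S \<and> separated_set X T n \<epsilon> S \<and> real (card S) > exp (c * n) \<longrightarrow>
        (\<exists>p\<in>P. \<exists>I\<subseteq>{..<n}. indep T X (fst p) (snd p) I \<and> real (card I) \<ge> \<theta> * n)"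
      using step2[OF assms(1) TX epos c] by blast
    have fr2: "frequently (\<lambda>n. \<exists>p\<in>P. \<exists>I. I \<subseteq> {..<n} \<and> indep T X (fst p) (snd p) I \<and> real (card I) \<ge> \<theta> * n) sequentially"
    proof -
      have ev: "eventually (\<lambda>n. n \<ge> N0) sequentially" by (rule eventually_ge_at_top)
      have "frequently (\<lambda>n. n \<ge> N0 \<and> (\<exists>S. finite S \<and> separated_set X T n \<epsilon> S \<and> real (card S) > exp (c * n))) sequentially"
        using frequently_eventually_conj[OF fr1 ev] by (simp add: conj_commute)
      then show ?thesis
        by (rule frequently_elim1) (use PN in blast)
    qed
    obtain p where p: "p \<in> P" and frp: "frequently (\<lambda>n. \<exists>I. I \<subseteq> {..<n} \<and> indep T X (fst p) (snd p) I \<and> real (card I) \<ge> \<theta> * n) sequentially"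
      using frequently_finite_pigeon[OF P(1) fr2] by blast
    have long: "\<And>N. \<exists>l\<ge>N. \<exists>J. goodset T X (fst p) (snd p) (\<theta>/2) l J"
      using long_good[OF TX P(2) frp] by blast
    obtain J where J: "infinite J" "\<forall>F. F \<subseteq> J \<and> finite F \<longrightarrow> indep T X (fst p) (snd p) F"
      using koenig[OF TX _ long] P(2) by auto
    have "\<not> Frechet_space (subtopology (ptwise_top X) (enveloping_semigroup X T))"
    proof -
      have cl: "closed (fst p)" "closed (snd p)" "fst p \<inter> snd p = {}" using P(3) p by auto
      have "\<And>F. F \<subseteq> J \<Longrightarrow> finite F \<Longrightarrow> indep T X (fst p) (snd p) F" using J(2) by blast
      then show ?thesis by (rule not_frechet[OF assms(1) cont TX cl J(1)])
    qed
    then show False using Fr by contradiction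
  qed
  have "topological_entropy X T \<le> 0" unfolding te by (rule SUP_least) (rule le)
  then show ?thesis using ge by simp
qed

end
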